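(* Let $f(z)=\sum_{n=0}^\infty a_n z^n$ and $g(z)=\sum_{n=0}^\infty b_n z^n$ be analytic in $\mathbb{D}$, and suppose $f$ is quasi-subordinate to $g$ relative to $\Phi$, i.e. there exist functions $\Phi$ and $\omega$ analytic in $\mathbb{D}$ with $\omega(0)=0$, $|\omega(z)|\le1$ and $|\Phi(z)|\le 1$ for all $z\in\mathbb{D}$ such that $f(z)=\Phi(z)g(\omega(z))$ for $z\in\mathbb{D}$. Let $\Phi_0=\Phi(0)$ (so $a_0=\Phi_0 b_0$), $f_0=f-a_0$, $g_0=g-b_0$, and for $0\le r<1$ set $\|f_0\|_r=\sum_{n=1}^\infty |a_n|^2 r^{2n}$ and $\|g_0\|_r=\sum_{n=1}^\infty |b_n|^2 r^{2n}$. Then for all $0\le r\le 1/3$, $$\sum_{n=0}^\infty |a_n|r^n+\left(\frac{1}{1+|a_0|}+\frac{r}{1-r}\right)\|f_0\|_r\le \sum_{n=0}^\infty |b_n|r^n+\left(\frac{1}{1+|b_0\Phi_0|}+\frac{r}{1-r}\right)\left(|b_0|^2(1-|\Phi_0|^2)+\|g_0\|_r\right).$$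
   Context: $\mathbb{D}$ denotes the open unit disk in $\mathbb{C}$. *)

theory Defs
  imports "HOL-Complex_Analysis.Complex_Analysis"
begin

definition taylor_coeff :: "(complex \<Rightarrow> complex) \<Rightarrow> nat \<Rightarrow> complex" where
  "taylor_coeff f n = (deriv ^^ n) f 0 / fact n"

end

theory Submission
  imports Defs
begin


lemma tc_fps: "taylor_coeff f n = fps_nth (fps_expansion f 0) n"
  by (simp add: taylor_coeff_def fps_expansion_def)

lemma hol_fps: "h holomorphic_on ball 0 1 \<Longrightarrow> h has_fps_expansion fps_expansion h 0"
  by (rule has_fps_expansion_fps_expansion) auto

lemma hol_conv: assumes "h holomorphic_on ball 0 1" shows "fps_conv_radius (fps_expansion h 0) \<ge> 1"
proof -
  have "h holomorphic_on eball 0 (ereal 1)" using assms by simp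
  from conv_radius_fps_expansion[OF this] show ?thesis by (simp add: one_ereal_def)
qed

lemma hol_eval: assumes "h holomorphic_on ball 0 1" "norm z < 1" shows "eval_fps (fps_expansion h 0) z = h z"
proof -
  have "h holomorphic_on eball 0 (ereal 1)" using assms by simp
  from eval_fps_expansion'[OF this, of z] assms show ?thesis by simp
qed

lemma coeff_bound:
  assumes hol: "h holomorphic_on ball 0 1"
    and bd: "\<And>z. z \<in> ball 0 1 \<Longrightarrow> z \<noteq> 0 \<Longrightarrow> norm (h z) \<le> B"
  shows "norm (taylor_coeff h n) \<le> B"
proof -
  have "eventually (\<lambda>\<rho>. \<rho> \<in> {0<..<1}) (at_left (1::real))"
    by (rule eventually_at_left_real) simp
  then have ev: "eventually (\<lambda>\<rho>. norm (taylor_coeff h n) \<le> B / \<rho>^n) (at_left (1::real))"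
  proof eventually_elim
    case (elim \<rho>)
    have "norm ((deriv ^^ n) h 0) \<le> fact n * B / \<rho>^n"
    proof (rule Cauchy_inequality)
      show "h holomorphic_on ball 0 \<rho>" using hol by (rule holomorphic_on_subset) (use elim in auto)
      show "continuous_on (cball 0 \<rho>) h"
        using holomorphic_on_imp_continuous_on[OF hol] by (rule continuous_on_subset) (use elim in auto)
      show "0 < \<rho>" using elim by auto
      fix x :: complex assume "norm (0 - x) = \<rho>" then show "norm (h x) \<le> B" using elim by (intro bd) auto
    qed
    then show ?case by (simp add: taylor_coeff_def norm_divide field_simps)
  qed
  have "((\<lambda>\<rho>::real. B / \<rho>^n) \<longlongrightarrow> B / 1^n) (at_left 1)"
    by (intro tendsto_intros) auto
  then have lim: "((\<lambda>\<rho>::real. B / \<rho>^n) \<longlongrightarrow> B) (at_left 1)" by simp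
  show ?thesis by (rule tendsto_le[OF trivial_limit_at_left_real lim tendsto_const ev])
qed

lemma rot_hol:
  assumes "norm c = 1" "h holomorphic_on ball 0 1"
  shows "(\<lambda>z. h (c * z)) holomorphic_on ball 0 1"
proof -
  have "(h \<circ> (\<lambda>z. c*z)) holomorphic_on ball 0 1"
    by (rule holomorphic_on_compose_gen[where t="ball 0 1"]) (auto intro: holomorphic_intros simp: norm_mult assms)
  then show ?thesis by (simp add: o_def)
qed

lemma rot_fps:
  assumes "h holomorphic_on ball 0 1"
  shows "(\<lambda>z. h (c*z)) has_fps_expansion Abs_fps (\<lambda>j. c^j * fps_nth (fps_expansion h 0) j)"
proof -
  have "(h \<circ> (\<lambda>z. c*z)) has_fps_expansion (fps_expansion h 0 oo (fps_const c * fps_X))"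
    by (rule has_fps_expansion_compose) (auto intro!: fps_expansion_intros hol_fps assms)
  then show ?thesis by (simp add: fps_compose_linear o_def)
qed

lemma mobius_le:
  fixes u a :: complex
  assumes "norm u \<le> 1" "norm a \<le> 1"
  shows "norm (u - a) \<le> norm (1 - cnj a * u)"
proof (rule power2_le_imp_le)
  define x where "x = Re u" define y where "y = Im u"
  define p where "p = Re a" define q where "q = Im a"
  have u2: "x^2 + y^2 \<le> 1" using assms(1) by (simp add: x_def y_def cmod_power2[symmetric] power_le_one)
  have a2: "p^2 + q^2 \<le> 1" using assms(2) by (simp add: p_def q_def cmod_power2[symmetric] power_le_one)
  have l: "(norm (u - a))^2 = (x-p)^2 + (y-q)^2" by (simp add: cmod_power2 x_def y_def p_def q_def)
  have r: "(norm (1 - cnj a * u))^2 = (1 - p*x - q*y)^2 + (p*y - q*x)^2"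
    unfolding cmod_power2 by (simp add: x_def y_def p_def q_def power2_eq_square algebra_simps)
  have "(1 - p*x - q*y)^2 + (p*y - q*x)^2 - ((x-p)^2 + (y-q)^2) = (1 - p^2 - q^2) * (1 - x^2 - y^2)"
    by (simp add: power2_eq_square algebra_simps)
  moreover have "(1 - p^2 - q^2) * (1 - x^2 - y^2) \<ge> 0" using u2 a2 by (intro mult_nonneg_nonneg) auto
  ultimately show "(norm (u - a))^2 \<le> (norm (1 - cnj a * u))^2" using l r by linarith
qed simp



lemma cis_pow_n: assumes "0 < n" shows "cis (2 * pi / real n) ^ n = 1"
proof -
  have "cis (2 * pi / real n) ^ n = cis (real n * (2 * pi / real n))" by (rule Complex.DeMoivre)
  also have "real n * (2 * pi / real n) = 2 * pi" using assms by simp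
  finally show ?thesis by (simp add: cis.code complex_eq_iff)
qed

lemma roots_sum0:
  fixes n j :: nat
  assumes "0 < j" "j < n"
  shows "(\<Sum>k<n. (cis (2 * pi / real n) ^ k) ^ j) = 0"
proof -
  define \<epsilon> where "\<epsilon> = cis (2 * pi / real n)"
  have n: "n > 0" using assms by simp
  have inj: "inj_on (\<lambda>k. cis (2 * pi * real k / real n)) {..<n}"
    using Complex.bij_betw_roots_unity[OF n] by (auto simp: bij_betw_def)
  have ej: "\<epsilon>^j = cis (2 * pi * real j / real n)" by (simp add: \<epsilon>_def Complex.DeMoivre mult_ac)
  have "\<epsilon>^j \<noteq> 1"
  proof
    assume "\<epsilon>^j = 1"
    then have "cis (2 * pi * real j / real n) = cis (2 * pi * real 0 / real n)" using ej by simp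
    have "j = 0" by (rule inj_onD[OF inj]) (use \<open>cis (2 * pi * real j / real n) = cis (2 * pi * real 0 / real n)\<close> assms in auto)
    with assms show False by simp
  qed
  moreover have "(\<epsilon>^j)^n = 1"
  proof -
    have "\<epsilon>^n = 1" using cis_pow_n[OF n] by (simp add: \<epsilon>_def)
    then show ?thesis by (metis power_mult mult.commute power_one)
  qed
  ultimately have "(\<Sum>k<n. (\<epsilon>^j)^k) = 0" by (simp add: geometric_sum)
  moreover have "(\<epsilon>^k)^j = (\<epsilon>^j)^k" for k by (metis power_mult mult.commute)
  ultimately show ?thesis by (simp add: \<epsilon>_def)
qed

lemma roots_sumn:
  fixes n :: nat
  assumes "0 < n"
  shows "(\<Sum>k<n. (cis (2 * pi / real n) ^ k) ^ n) = of_nat n"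
proof -
  have "cis (2 * pi / real n) ^ n = 1" by (rule cis_pow_n[OF assms])
  then have "(cis (2 * pi / real n) ^ k) ^ n = 1" for k
    by (metis power_mult mult.commute power_one)
  then show ?thesis by simp
qed

lemma wiener_strict:
  fixes h :: "complex \<Rightarrow> complex"
  assumes hol: "h holomorphic_on ball 0 1" and bd: "\<And>z. z \<in> ball 0 1 \<Longrightarrow> norm (h z) \<le> 1"
    and a: "norm (h 0) < 1" and n: "n \<ge> 1"
  shows "norm (taylor_coeff h n) \<le> 1 - (norm (h 0))^2"
proof -
  define H where "H = fps_expansion h 0"
  define a where "a = h 0"
  define \<epsilon> where "\<epsilon> = cis (2 * pi / real n)"
  have n\<epsilon>: "norm (\<epsilon>^k) = 1" for k by (simp add: \<epsilon>_def norm_power)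
  define u where "u = (\<lambda>z. of_real (1 / real n) * (\<Sum>k<n. h (\<epsilon>^k * z)))"
  have u_hol: "u holomorphic_on ball 0 1" unfolding u_def
    by (intro holomorphic_intros rot_hol n\<epsilon> hol)
  have u_bd: "norm (u z) \<le> 1" if "z \<in> ball 0 1" for z
  proof -
    have "norm (\<Sum>k<n. h (\<epsilon>^k*z)) \<le> (\<Sum>k<n. 1)"
      by (rule sum_norm_le) (use that in \<open>auto intro!: bd simp: norm_mult n\<epsilon>\<close>)
    then have "norm (\<Sum>k<n. h (\<epsilon>^k*z)) / real n \<le> 1" using n by (simp add: divide_le_eq_1)
    then show ?thesis by (simp add: u_def norm_mult norm_divide)
  qed
  have u0: "u 0 = a" using n by (simp add: u_def a_def)
  define U where "U = Abs_fps (\<lambda>j. of_real (1/real n) * (\<Sum>k<n. (\<epsilon>^k)^j) * fps_nth H j)"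
  have u_fps: "u has_fps_expansion U"
  proof -
    have "u has_fps_expansion fps_const (of_real (1/real n)) * (\<Sum>k<n. Abs_fps (\<lambda>j. (\<epsilon>^k)^j * fps_nth H j))"
      unfolding u_def H_def by (intro fps_expansion_intros rot_fps hol)
    moreover have "fps_const (of_real (1/real n)) * (\<Sum>k<n. Abs_fps (\<lambda>j. (\<epsilon>^k)^j * fps_nth H j)) = U"
      by (simp add: U_def fps_eq_iff fps_sum_nth sum_distrib_left mult_ac)
    ultimately show ?thesis by simp
  qed
  have H0: "fps_nth H 0 = a" by (simp add: H_def a_def fps_expansion_def)
  have U0: "fps_nth U 0 = a" using n by (simp add: U_def H0)
  have Umid: "fps_nth U j = 0" if "0 < j" "j < n" for j
    using roots_sum0[OF that] by (simp add: U_def \<epsilon>_def)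
  have Un: "fps_nth U n = fps_nth H n"
    using roots_sumn[of n] n by (simp add: U_def \<epsilon>_def)
  define \<psi> where "\<psi> = (\<lambda>z. (u z - a) / (1 - cnj a * u z))"
  have den: "1 - cnj a * u z \<noteq> 0" if "z \<in> ball 0 1" for z
  proof
    assume "1 - cnj a * u z = 0"
    then have "cnj a * u z = 1" by simp
    then have "norm (cnj a * u z) = 1" by simp
    moreover have "norm (cnj a * u z) < 1"
    proof -
      have "norm (cnj a * u z) = norm a * norm (u z)" by (simp add: norm_mult)
      also have "\<dots> \<le> norm a" using u_bd[OF that] by (simp add: mult_left_le)
      finally show ?thesis using a by (simp add: a_def)
    qed
    ultimately show False by simp
  qed
  have \<psi>_hol: "\<psi> holomorphic_on ball 0 1"
    unfolding \<psi>_def by (intro holomorphic_intros u_hol den) auto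
  have \<psi>_bd: "norm (\<psi> z) \<le> 1" if "z \<in> ball 0 1" for z
  proof -
    have "norm (u z - a) \<le> norm (1 - cnj a * u z)"
      by (rule mobius_le) (use u_bd[OF that] a in \<open>auto simp: a_def\<close>)
    then show ?thesis using den[OF that] by (simp add: \<psi>_def norm_divide divide_le_eq_1)
  qed
  have \<psi>0: "\<psi> 0 = 0" by (simp add: \<psi>_def u0)
  define \<Psi> where "\<Psi> = fps_expansion \<psi> 0"
  have prod: "(\<lambda>z. \<psi> z * (1 - cnj a * u z)) has_fps_expansion \<Psi> * (1 - fps_const (cnj a) * U)"
    unfolding \<Psi>_def by (intro fps_expansion_intros hol_fps \<psi>_hol u_fps)
  have "eventually (\<lambda>z. z \<in> ball 0 1) (nhds (0::complex))"
    by (intro eventually_nhds_in_open) auto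
  then have evq: "eventually (\<lambda>z. \<psi> z * (1 - cnj a * u z) = u z - a) (nhds 0)"
  proof eventually_elim
    case (elim z)
    then have "1 - cnj a * u z \<noteq> 0" by (rule den)
    then show ?case by (simp add: \<psi>_def)
  qed
  have "(\<lambda>z. u z - a) has_fps_expansion \<Psi> * (1 - fps_const (cnj a) * U)"
    by (rule has_fps_expansion_cong[THEN iffD1, OF evq refl prod])
  moreover have "(\<lambda>z. u z - a) has_fps_expansion U - fps_const a"
    by (intro fps_expansion_intros u_fps)
  ultimately have eq: "\<Psi> * (1 - fps_const (cnj a) * U) = U - fps_const a"
    using fps_expansion_unique_complex by blast
  have "fps_nth (\<Psi> * (1 - fps_const (cnj a) * U)) n = (\<Sum>i=0..n. fps_nth \<Psi> i * fps_nth (1 - fps_const (cnj a) * U) (n - i))"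
    by (rule fps_mult_nth)
  also have "\<dots> = fps_nth \<Psi> n * fps_nth (1 - fps_const (cnj a) * U) (n - n)
      + (\<Sum>i\<in>{0..n} - {n}. fps_nth \<Psi> i * fps_nth (1 - fps_const (cnj a) * U) (n - i))"
    by (rule sum.remove) auto
  also have "(\<Sum>i\<in>{0..n} - {n}. fps_nth \<Psi> i * fps_nth (1 - fps_const (cnj a) * U) (n - i)) = 0"
  proof (rule sum.neutral, rule ballI)
    fix i assume i: "i \<in> {0..n} - {n}"
    show "fps_nth \<Psi> i * fps_nth (1 - fps_const (cnj a) * U) (n - i) = 0"
    proof (cases "i = 0")
      case True
      then show ?thesis by (simp add: \<Psi>_def fps_expansion_def \<psi>0)
    next
      case False
      then have "0 < n - i" "n - i < n" using i by auto
      then show ?thesis using Umid[of "n - i"] by simp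
    qed
  qed
  finally have "fps_nth (\<Psi> * (1 - fps_const (cnj a) * U)) n = fps_nth \<Psi> n * (1 - cnj a * a)"
    by (simp add: U0)
  moreover have "fps_nth (U - fps_const a) n = fps_nth H n" using n Un by simp
  ultimately have key: "fps_nth \<Psi> n * (1 - cnj a * a) = fps_nth H n" using eq by simp
  have aa: "cnj a * a = of_real ((norm a)^2)" by (simp add: complex_norm_square[symmetric] mult.commute)
  have a2: "norm a ^ 2 \<le> 1" using a by (simp add: a_def power_le_one)
  have na: "norm (1 - cnj a * a) = 1 - (norm a)^2"
  proof -
    have "1 - cnj a * a = of_real (1 - (norm a)^2)" unfolding aa by simp
    then have "norm (1 - cnj a * a) = abs (1 - (norm a)^2)" by (simp only: norm_of_real)
    then show ?thesis using a2 by simp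
  qed
  have p1: "norm (fps_nth \<Psi> n) \<le> 1"
    using coeff_bound[OF \<psi>_hol, of 1 n] \<psi>_bd by (simp add: tc_fps \<Psi>_def)
  have "norm (fps_nth H n) = norm (fps_nth \<Psi> n) * norm (1 - cnj a * a)"
    by (simp only: key[symmetric] norm_mult)
  also have "\<dots> = norm (fps_nth \<Psi> n) * (1 - (norm a)^2)" by (simp only: na)
  also have "\<dots> \<le> 1 * (1 - (norm a)^2)" by (rule mult_right_mono[OF p1]) (use a2 in simp)
  finally have "norm (fps_nth H n) \<le> 1 - (norm a)^2" by simp
  then show ?thesis by (simp add: tc_fps H_def a_def)
qed



lemma tc_cmult: assumes "h holomorphic_on ball 0 1"
  shows "taylor_coeff (\<lambda>z. c * h z) n = c * taylor_coeff h n"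
proof -
  have "(\<lambda>z. c * h z) has_fps_expansion fps_const c * fps_expansion h 0"
    by (intro fps_expansion_intros hol_fps assms)
  then have "fps_expansion (\<lambda>z. c * h z) 0 = fps_const c * fps_expansion h 0"
    by (rule fps_expansion_eqI)
  then show ?thesis by (simp add: tc_fps)
qed

lemma wiener:
  fixes h :: "complex \<Rightarrow> complex"
  assumes hol: "h holomorphic_on ball 0 1" and bd: "\<And>z. z \<in> ball 0 1 \<Longrightarrow> norm (h z) \<le> 1"
    and n: "n \<ge> 1"
  shows "norm (taylor_coeff h n) \<le> 1 - (norm (h 0))^2"
proof -
  have key: "t^2 * (norm (taylor_coeff h n) + (norm (h 0))^2) \<le> 1" if t: "0 < t" "t < 1" for t :: real
  proof -
    define g where "g = (\<lambda>z. of_real t * h z)"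
    have holg: "g holomorphic_on ball 0 1" unfolding g_def by (intro holomorphic_intros hol)
    have bdg: "norm (g z) \<le> 1" if "z \<in> ball 0 1" for z
    proof -
      have "norm (g z) = t * norm (h z)" using t by (simp add: g_def norm_mult)
      also have "\<dots> \<le> t * 1" using bd[OF that] t by (intro mult_left_mono) auto
      finally show ?thesis using t by simp
    qed
    have "norm (g 0) = t * norm (h 0)" using t by (simp add: g_def norm_mult)
    also have "\<dots> \<le> t * 1" using bd[of 0] t by (intro mult_left_mono) auto
    finally have a: "norm (g 0) < 1" using t by simp
    have w: "norm (taylor_coeff g n) \<le> 1 - (norm (g 0))^2" by (rule wiener_strict[OF holg bdg a n])
    have "taylor_coeff g n = of_real t * taylor_coeff h n" unfolding g_def by (rule tc_cmult[OF hol])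
    then have "norm (taylor_coeff g n) = t * norm (taylor_coeff h n)" using t by (simp add: norm_mult)
    moreover have "(norm (g 0))^2 = t^2 * (norm (h 0))^2" using t by (simp add: g_def norm_mult power_mult_distrib)
    ultimately have "t * norm (taylor_coeff h n) + t^2 * (norm (h 0))^2 \<le> 1" using w by simp
    moreover have "t^2 * norm (taylor_coeff h n) \<le> t * norm (taylor_coeff h n)"
      using t by (intro mult_right_mono) (auto simp: power2_eq_square)
    ultimately show ?thesis by (simp add: algebra_simps)
  qed
  have "norm (taylor_coeff h n) + (norm (h 0))^2 \<le> 1"
  proof (rule field_le_mult_one_interval)
    fix z :: real assume z: "0 < z" "z < 1"
    have "(sqrt z)^2 * (norm (taylor_coeff h n) + (norm (h 0))^2) \<le> 1"
      using z by (intro key) (auto simp: real_sqrt_lt_1_iff)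
    then show "z * (norm (taylor_coeff h n) + (norm (h 0))^2) \<le> 1" using z by simp
  qed
  then show ?thesis by simp
qed

lemma conv_lt: assumes "(1::ereal) \<le> fps_conv_radius F" "norm z < 1"
  shows "ereal (norm z) < fps_conv_radius F"
proof -
  have "ereal (norm z) < 1" using assms(2) by (simp add: one_ereal_def)
  then show ?thesis using assms(1) by (rule less_le_trans)
qed

lemma maj_summable:
  assumes "h holomorphic_on ball 0 1" "0 \<le> r" "r < 1"
  shows "summable (\<lambda>n. norm (taylor_coeff h n) * r^n)"
proof -
  have "norm (complex_of_real r) < fps_conv_radius (fps_expansion h 0)"
    using conv_lt[OF hol_conv[OF assms(1)], of "complex_of_real r"] assms by simp
  from norm_summable_fps[OF this] show ?thesis
    using assms by (simp add: tc_fps norm_mult norm_power)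
qed

lemma bohr:
  fixes h :: "complex \<Rightarrow> complex"
  assumes hol: "h holomorphic_on ball 0 1" and bd: "\<And>z. z \<in> ball 0 1 \<Longrightarrow> norm (h z) \<le> 1"
    and r: "0 \<le> r" "r \<le> 1/3"
  shows "(\<Sum>n. norm (taylor_coeff h n) * r^n) \<le> 1"
proof -
  define a where "a = norm (h 0)"
  have a1: "a \<le> 1" "0 \<le> a" using bd[of 0] by (auto simp: a_def)
  define f where "f = (\<lambda>n. norm (taylor_coeff h n) * r^n)"
  have sm: "summable f" unfolding f_def by (rule maj_summable[OF hol]) (use r in auto)
  have f0: "f 0 = a" by (simp add: f_def a_def taylor_coeff_def)
  have r1: "norm r < 1" using r by simp
  have smg: "summable (\<lambda>n. (1 - a^2) * r^Suc n)"
    by (intro summable_mult summable_ignore_initial_segment[where k=1, simplified] summable_geometric r1)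
  have "(\<Sum>n. f (Suc n)) \<le> (\<Sum>n. (1 - a^2) * r^Suc n)"
  proof (rule suminf_le)
    fix n
    have "norm (taylor_coeff h (Suc n)) \<le> 1 - a^2" unfolding a_def by (rule wiener[OF hol bd]) auto
    then show "f (Suc n) \<le> (1 - a^2) * r^Suc n" unfolding f_def using r by (intro mult_right_mono) auto
  qed (use sm smg in \<open>auto simp: summable_Suc_iff\<close>)
  also have "(\<Sum>n. (1 - a^2) * r^Suc n) = (1 - a^2) * (r * (1 / (1 - r)))"
    using suminf_geometric[OF r1] summable_geometric[OF r1]
    by (simp add: suminf_mult suminf_mult2[symmetric] power_Suc)
  finally have tail: "(\<Sum>n. f (Suc n)) \<le> (1 - a^2) * (r / (1 - r))" by simp
  have "suminf f = f 0 + (\<Sum>n. f (Suc n))" using suminf_split_head[OF sm] by simp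
  also have "\<dots> \<le> a + (1 - a^2) * (r / (1 - r))" using tail f0 by simp
  also have "\<dots> \<le> a + (1 - a^2) * (1/2)"
  proof -
    have "r / (1 - r) \<le> 1/2" using r by (simp add: divide_simps)
    moreover have "0 \<le> 1 - a^2" using a1 by (simp add: power_le_one)
    ultimately have "(1 - a^2) * (r / (1 - r)) \<le> (1 - a^2) * (1/2)" by (intro mult_left_mono)
    then show ?thesis by simp
  qed
  also have "\<dots> \<le> 1"
  proof -
    have "(1 - a)^2 \<ge> 0" by simp
    then show ?thesis by (simp add: power2_eq_square algebra_simps field_simps)
  qed
  finally show ?thesis by (simp add: f_def)
qed



definition nf :: "complex fps \<Rightarrow> real fps" where "nf A = Abs_fps (\<lambda>n. norm (fps_nth A n))"

lemma nf_nth [simp]: "fps_nth (nf A) n = norm (fps_nth A n)"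
  by (simp add: nf_def)

lemma nf_conv [simp]: "fps_conv_radius (nf A) = fps_conv_radius A"
  by (simp add: nf_def)

lemma nonneg_mult_fps:
  fixes A B :: "real fps"
  assumes "\<And>n. 0 \<le> fps_nth A n" "\<And>n. 0 \<le> fps_nth B n"
  shows "0 \<le> fps_nth (A * B) n"
  by (simp add: fps_mult_nth assms sum_nonneg)

lemma nonneg_pow_fps:
  fixes A :: "real fps"
  assumes "\<And>n. 0 \<le> fps_nth A n"
  shows "0 \<le> fps_nth (A ^ i) n"
proof (induction i arbitrary: n)
  case 0 then show ?case by simp
next
  case (Suc i) then show ?case by (simp add: nonneg_mult_fps assms)
qed

lemma nf_mult_le: fixes A B :: "complex fps" shows "norm (fps_nth (A * B) n) \<le> fps_nth (nf A * nf B) n"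
proof -
  have "norm (fps_nth (A * B) n) = norm (\<Sum>i=0..n. fps_nth A i * fps_nth B (n - i))"
    by (simp add: fps_mult_nth)
  also have "\<dots> \<le> (\<Sum>i=0..n. norm (fps_nth A i * fps_nth B (n - i)))" by (rule norm_sum)
  also have "\<dots> = fps_nth (nf A * nf B) n" by (simp add: fps_mult_nth norm_mult)
  finally show ?thesis .
qed

lemma pow_le: fixes W :: "complex fps" shows "norm (fps_nth (W ^ i) k) \<le> fps_nth (nf W ^ i) k"
proof (induction i arbitrary: k)
  case 0 then show ?case by simp
next
  case (Suc i)
  have "norm (fps_nth (W ^ Suc i) k) = norm (\<Sum>j=0..k. fps_nth W j * fps_nth (W^i) (k - j))"
    by (simp add: fps_mult_nth)
  also have "\<dots> \<le> (\<Sum>j=0..k. norm (fps_nth W j * fps_nth (W^i) (k - j)))" by (rule norm_sum)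
  also have "\<dots> \<le> (\<Sum>j=0..k. norm (fps_nth W j) * fps_nth (nf W ^ i) (k - j))"
    by (rule sum_mono) (simp add: norm_mult mult_left_mono Suc.IH)
  also have "\<dots> = fps_nth (nf W ^ Suc i) k" by (simp add: fps_mult_nth)
  finally show ?case .
qed

lemma eval_nf: fixes A :: "complex fps" shows "eval_fps (nf A) r = (\<Sum>n. norm (fps_nth A n) * r^n)"
  by (simp add: eval_fps_def)

lemma maj_mult:
  fixes A B :: "complex fps"
  assumes cA: "ereal r < fps_conv_radius A" and cB: "ereal r < fps_conv_radius B" and r: "0 \<le> r"
  shows "(\<Sum>n. norm (fps_nth (A*B) n) * r^n) \<le> (\<Sum>n. norm (fps_nth A n) * r^n) * (\<Sum>n. norm (fps_nth B n) * r^n)"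
proof -
  have cA': "norm r < fps_conv_radius (nf A)" using cA r by simp
  have cB': "norm r < fps_conv_radius (nf B)" using cB r by simp
  have cAB: "ereal r < fps_conv_radius (A * B)"
  proof -
    have "ereal r < min (fps_conv_radius A) (fps_conv_radius B)" using cA cB by simp
    then show ?thesis using fps_conv_radius_mult[of A B] by (rule less_le_trans)
  qed
  have cAB': "norm r < fps_conv_radius (nf A * nf B)"
  proof -
    have "ereal (norm r) < min (fps_conv_radius (nf A)) (fps_conv_radius (nf B))" using cA' cB' by simp
    then show ?thesis using fps_conv_radius_mult[of "nf A" "nf B"] by (rule less_le_trans)
  qed
  have s1: "summable (\<lambda>n. norm (fps_nth (A*B) n) * r^n)"
    using norm_summable_fps[of "complex_of_real r" "A*B"] cAB r by (simp add: norm_mult norm_power)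
  have s2: "summable (\<lambda>n. fps_nth (nf A * nf B) n * r^n)"
    using summable_fps[OF cAB'] .
  have "(\<Sum>n. norm (fps_nth (A*B) n) * r^n) \<le> (\<Sum>n. fps_nth (nf A * nf B) n * r^n)"
    by (rule suminf_le[OF _ s1 s2]) (use r in \<open>auto intro!: mult_right_mono nf_mult_le\<close>)
  also have "\<dots> = eval_fps (nf A * nf B) r" by (simp add: eval_fps_def)
  also have "\<dots> = eval_fps (nf A) r * eval_fps (nf B) r" by (rule eval_fps_mult[OF cA' cB'])
  finally show ?thesis by (simp add: eval_nf)
qed

lemma maj_compose:
  fixes G W :: "complex fps"
  assumes cW: "ereal r < fps_conv_radius W" and r: "0 \<le> r"
    and Wr: "eval_fps (nf W) r \<le> r" and sG: "summable (\<lambda>n. norm (fps_nth G n) * r^n)"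
  shows "summable (\<lambda>n. norm (fps_nth (G oo W) n) * r^n)"
    and "(\<Sum>n. norm (fps_nth (G oo W) n) * r^n) \<le> (\<Sum>n. norm (fps_nth G n) * r^n)"
proof -
  define c where "c = (\<lambda>k. norm (fps_nth (G oo W) k) * r^k)"
  define M where "M = (\<Sum>n. norm (fps_nth G n) * r^n)"
  have nnW: "0 \<le> fps_nth (nf W ^ i) k" for i k by (rule nonneg_pow_fps) simp
  have evnn: "0 \<le> eval_fps (nf W) r"
    unfolding eval_fps_def using summable_fps[of r "nf W"] cW r by (intro suminf_nonneg) auto
  have part: "(\<Sum>k<N. c k) \<le> M" for N
  proof -
    have "(\<Sum>k<N. c k) \<le> (\<Sum>k<N. \<Sum>i<N. norm (fps_nth G i) * fps_nth (nf W ^ i) k * r^k)"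
    proof (rule sum_mono)
      fix k assume k: "k \<in> {..<N}"
      have "norm (fps_nth (G oo W) k) = norm (\<Sum>i=0..k. fps_nth G i * fps_nth (W^i) k)"
        by (simp add: fps_compose_nth)
      also have "\<dots> \<le> (\<Sum>i=0..k. norm (fps_nth G i * fps_nth (W^i) k))" by (rule norm_sum)
      also have "\<dots> \<le> (\<Sum>i=0..k. norm (fps_nth G i) * fps_nth (nf W ^ i) k)"
        by (rule sum_mono) (simp add: norm_mult mult_left_mono pow_le)
      also have "\<dots> \<le> (\<Sum>i<N. norm (fps_nth G i) * fps_nth (nf W ^ i) k)"
        by (rule sum_mono2) (use k nnW in auto)
      finally have "norm (fps_nth (G oo W) k) * r^k \<le> (\<Sum>i<N. norm (fps_nth G i) * fps_nth (nf W ^ i) k) * r^k"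
        using r by (intro mult_right_mono) auto
      then show "c k \<le> (\<Sum>i<N. norm (fps_nth G i) * fps_nth (nf W ^ i) k * r^k)"
        by (simp add: c_def sum_distrib_right)
    qed
    also have "\<dots> = (\<Sum>i<N. norm (fps_nth G i) * (\<Sum>k<N. fps_nth (nf W ^ i) k * r^k))"
      by (subst sum.swap) (simp add: sum_distrib_left mult_ac)
    also have "\<dots> \<le> (\<Sum>i<N. norm (fps_nth G i) * r^i)"
    proof (rule sum_mono)
      fix i
      have ci: "norm r < fps_conv_radius (nf W ^ i)"
      proof -
        have "ereal (norm r) < fps_conv_radius (nf W)" using cW r by simp
        then show ?thesis using fps_conv_radius_power[of "nf W" i] by (rule less_le_trans)
      qed
      have "(\<Sum>k<N. fps_nth (nf W ^ i) k * r^k) \<le> (\<Sum>k. fps_nth (nf W ^ i) k * r^k)"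
        by (rule sum_le_suminf[OF summable_fps[OF ci]]) (use nnW r in auto)
      also have "\<dots> = eval_fps (nf W ^ i) r" by (simp add: eval_fps_def)
      also have "\<dots> = (eval_fps (nf W) r)^i" by (rule eval_fps_power) (use cW r in simp)
      also have "\<dots> \<le> r^i" by (rule power_mono[OF Wr evnn])
      finally show "norm (fps_nth G i) * (\<Sum>k<N. fps_nth (nf W ^ i) k * r^k) \<le> norm (fps_nth G i) * r^i"
        by (rule mult_left_mono) simp
    qed
    also have "\<dots> \<le> M" unfolding M_def by (rule sum_le_suminf[OF sG]) (use r in auto)
    finally show ?thesis .
  qed
  have summ: "summable c"
  proof (rule bounded_imp_summable)
    show "0 \<le> c n" for n using r by (simp add: c_def)
    show "(\<Sum>k\<le>n. c k) \<le> M" for n using part[of "Suc n"] by (simp add: lessThan_Suc_atMost)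
  qed
  then show "summable (\<lambda>n. norm (fps_nth (G oo W) n) * r^n)" by (simp add: c_def)
  show "(\<Sum>n. norm (fps_nth (G oo W) n) * r^n) \<le> (\<Sum>n. norm (fps_nth G n) * r^n)"
    using suminf_le_const[OF summ part] by (simp add: c_def M_def)
qed



lemma schwarz_le:
  fixes \<omega> :: "complex \<Rightarrow> complex"
  assumes hol: "\<omega> holomorphic_on ball 0 1" and w0: "\<omega> 0 = 0"
    and bd: "\<And>z. z \<in> ball 0 1 \<Longrightarrow> norm (\<omega> z) \<le> 1" and xi: "norm \<xi> < 1"
  shows "norm (\<omega> \<xi>) \<le> norm \<xi>"
proof (rule field_le_mult_one_interval)
  fix t :: real assume t: "0 < t" "t < 1"
  have "norm ((\<lambda>z. of_real t * \<omega> z) \<xi>) \<le> norm \<xi>"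
  proof (rule Schwarz_Lemma(1))
    show "(\<lambda>z. of_real t * \<omega> z) holomorphic_on ball 0 1" by (intro holomorphic_intros hol)
    show "of_real t * \<omega> 0 = 0" by (simp add: w0)
    fix z :: complex assume "norm z < 1"
    then have "norm (\<omega> z) \<le> 1" by (intro bd) auto
    then have "t * norm (\<omega> z) \<le> t * 1" using t by (intro mult_left_mono) auto
    then have "t * norm (\<omega> z) < 1" using t by linarith
    then show "norm (of_real t * \<omega> z) < 1" using t by (simp add: norm_mult)
  qed (use xi in auto)
  then show "t * norm (\<omega> \<xi>) \<le> norm \<xi>" using t by (simp add: norm_mult)
qed

lemma schwarz_maj:
  fixes \<omega> :: "complex \<Rightarrow> complex"
  assumes hol: "\<omega> holomorphic_on ball 0 1" and w0: "\<omega> 0 = 0"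
    and bd: "\<And>z. z \<in> ball 0 1 \<Longrightarrow> norm (\<omega> z) \<le> 1" and r: "0 \<le> r" "r \<le> 1/3"
  shows "eval_fps (nf (fps_expansion \<omega> 0)) r \<le> r"
proof -
  define W where "W = fps_expansion \<omega> 0"
  have cW: "1 \<le> fps_conv_radius W" unfolding W_def by (rule hol_conv[OF hol])
  have W0: "fps_nth W 0 = 0" by (simp add: W_def fps_expansion_def w0)
  define \<sigma> where "\<sigma> = eval_fps (fps_shift 1 W)"
  have sub: "ball 0 1 \<subseteq> eball (0::complex) (fps_conv_radius (fps_shift 1 W))"
  proof (rule subsetI)
    fix x :: complex assume "x \<in> ball 0 1"
    then have "norm x < 1" by simp
    from conv_lt[OF cW this] show "x \<in> eball 0 (fps_conv_radius (fps_shift 1 W))" by (simp add: dist_norm)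
  qed
  have \<sigma>_hol: "\<sigma> holomorphic_on ball 0 1" unfolding \<sigma>_def using sub by (rule holomorphic_on_eval_fps)
  have \<sigma>_fps: "fps_expansion \<sigma> 0 = fps_shift 1 W"
  proof (rule fps_expansion_eqI)
    have "(0::ereal) < 1" by simp
    from less_le_trans[OF this cW] have "0 < fps_conv_radius W" .
    then have "0 < fps_conv_radius (fps_shift 1 W)" by simp
    then show "\<sigma> has_fps_expansion fps_shift 1 W" unfolding \<sigma>_def by (rule eval_fps_has_fps_expansion)
  qed
  have tc\<sigma>: "taylor_coeff \<sigma> n = fps_nth W (Suc n)" for n by (simp add: tc_fps \<sigma>_fps)
  have eq: "\<omega> z = z * \<sigma> z" if z: "norm z < 1" for z
  proof -
    have cz: "ereal (norm z) < fps_conv_radius W" by (rule conv_lt[OF cW z])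
    have s1: "(\<lambda>n. fps_nth W n * z^n) sums \<omega> z"
      using sums_eval_fps[OF cz] hol_eval[OF hol z] by (simp add: W_def)
    have "(\<lambda>n. fps_nth (fps_shift 1 W) n * z^n) sums \<sigma> z"
      unfolding \<sigma>_def by (rule sums_eval_fps) (use cz in simp)
    then have "(\<lambda>n. z * (fps_nth W (Suc n) * z^n)) sums (z * \<sigma> z)" by (intro sums_mult) simp
    then have "(\<lambda>n. fps_nth W (Suc n) * z^Suc n) sums (z * \<sigma> z)" by (simp add: mult_ac)
    then have "(\<lambda>n. fps_nth W n * z^n) sums (z * \<sigma> z + fps_nth W 0 * z^0)"
      by (subst (asm) sums_Suc_iff)
    then have "(\<lambda>n. fps_nth W n * z^n) sums (z * \<sigma> z)" using W0 by simp
    with s1 show ?thesis by (rule sums_unique2)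
  qed
  have bd1: "norm (\<sigma> z) \<le> 1" if z: "z \<in> ball 0 1" "z \<noteq> 0" for z
  proof -
    have "norm z * norm (\<sigma> z) = norm (\<omega> z)" using eq[of z] z by (simp add: norm_mult)
    also have "\<dots> \<le> norm z" by (rule schwarz_le[OF hol w0 bd]) (use z in auto)
    finally show ?thesis using z by simp
  qed
  have bd: "norm (\<sigma> z) \<le> 1" if z: "z \<in> ball 0 1" for z
  proof (cases "z = 0")
    case True
    have "norm (taylor_coeff \<sigma> 0) \<le> 1" by (rule coeff_bound[OF \<sigma>_hol bd1])
    then show ?thesis using True by (simp add: taylor_coeff_def)
  qed (use bd1 z in auto)
  have B: "(\<Sum>n. norm (taylor_coeff \<sigma> n) * r^n) \<le> 1" by (rule bohr[OF \<sigma>_hol bd r])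
  have r1: "r < 1" using r by simp
  define a where "a = (\<lambda>n. norm (fps_nth W n) * r^n)"
  have sa: "summable a"
    using maj_summable[OF hol r(1) r1] by (simp add: a_def W_def tc_fps)
  have "eval_fps (nf W) r = suminf a" by (simp add: eval_nf a_def)
  also have "\<dots> = a 0 + (\<Sum>n. a (Suc n))" using suminf_split_head[OF sa] by simp
  also have "a 0 = 0" by (simp add: a_def W0)
  also have "(\<Sum>n. a (Suc n)) = (\<Sum>n. r * (norm (taylor_coeff \<sigma> n) * r^n))"
    by (simp add: a_def tc\<sigma> mult_ac)
  also have "\<dots> = r * (\<Sum>n. norm (taylor_coeff \<sigma> n) * r^n)"
    by (rule suminf_mult[OF maj_summable[OF \<sigma>_hol r(1) r1]])
  also have "\<dots> \<le> r * 1" by (rule mult_left_mono[OF B r(1)])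
  finally show ?thesis by (simp add: W_def)
qed



lemma maj_main:
  fixes f g \<Phi> \<omega> :: "complex \<Rightarrow> complex" and r :: real
  assumes f_hol: "f holomorphic_on ball 0 1"
    and g_hol: "g holomorphic_on ball 0 1"
    and \<Phi>_hol: "\<Phi> holomorphic_on ball 0 1"
    and \<omega>_hol: "\<omega> holomorphic_on ball 0 1"
    and \<omega>0: "\<omega> 0 = 0"
    and \<omega>_bd: "\<And>z. z \<in> ball 0 1 \<Longrightarrow> norm (\<omega> z) \<le> 1"
    and \<Phi>_bd: "\<And>z. z \<in> ball 0 1 \<Longrightarrow> norm (\<Phi> z) \<le> 1"
    and quasi: "\<And>z. z \<in> ball 0 1 \<Longrightarrow> f z = \<Phi> z * g (\<omega> z)"
    and r: "0 \<le> r" "r \<le> 1/3"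
  shows "(\<Sum>n. norm (taylor_coeff f n) * r^n) \<le> (\<Sum>n. norm (taylor_coeff g n) * r^n)"
proof -
  define P where "P = fps_expansion \<Phi> 0"
  define G where "G = fps_expansion g 0"
  define W where "W = fps_expansion \<omega> 0"
  have r1: "r < 1" using r by simp
  have wball: "\<omega> z \<in> ball 0 1" if "z \<in> ball 0 1" for z
    using schwarz_le[OF \<omega>_hol \<omega>0 \<omega>_bd, of z] that by simp
  have gw_hol: "(g \<circ> \<omega>) holomorphic_on ball 0 1"
    by (rule holomorphic_on_compose_gen[OF \<omega>_hol g_hol]) (use wball in blast)
  have W0: "fps_nth W 0 = 0" by (simp add: W_def fps_expansion_def \<omega>0)
  have gw_fps: "(g \<circ> \<omega>) has_fps_expansion (G oo W)"
    unfolding G_def W_def by (rule has_fps_expansion_compose[OF hol_fps[OF g_hol] hol_fps[OF \<omega>_hol]]) (use W0 in \<open>simp add: W_def\<close>)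
  have H: "fps_expansion (g \<circ> \<omega>) 0 = G oo W" by (rule fps_expansion_eqI[OF gw_fps])
  have cH: "1 \<le> fps_conv_radius (G oo W)" using hol_conv[OF gw_hol] H by simp
  have prod: "(\<lambda>z. \<Phi> z * (g \<circ> \<omega>) z) has_fps_expansion P * (G oo W)"
    unfolding P_def by (intro has_fps_expansion_mult hol_fps \<Phi>_hol gw_fps)
  have "eventually (\<lambda>z. z \<in> ball 0 1) (nhds (0::complex))"
    by (intro eventually_nhds_in_open) auto
  then have ev: "eventually (\<lambda>z. \<Phi> z * (g \<circ> \<omega>) z = f z) (nhds 0)"
    by eventually_elim (simp add: quasi)
  have "f has_fps_expansion P * (G oo W)"
    by (rule has_fps_expansion_cong[THEN iffD1, OF ev refl prod])
  then have F: "fps_expansion f 0 = P * (G oo W)" by (rule fps_expansion_eqI)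
  have cP: "ereal r < fps_conv_radius P"
    using conv_lt[OF hol_conv[OF \<Phi>_hol], of r] r r1 by (simp add: P_def)
  have cH': "ereal r < fps_conv_radius (G oo W)"
    using conv_lt[OF cH, of r] r r1 by simp
  have cW: "ereal r < fps_conv_radius W"
    using conv_lt[OF hol_conv[OF \<omega>_hol], of r] r r1 by (simp add: W_def)
  have Wr: "eval_fps (nf W) r \<le> r" unfolding W_def by (rule schwarz_maj[OF \<omega>_hol \<omega>0 \<omega>_bd r])
  have sG: "summable (\<lambda>n. norm (fps_nth G n) * r^n)"
    using maj_summable[OF g_hol r(1) r1] by (simp add: G_def tc_fps)
  note mc = maj_compose[OF cW r(1) Wr sG]
  have MP: "(\<Sum>n. norm (fps_nth P n) * r^n) \<le> 1"
    using bohr[OF \<Phi>_hol \<Phi>_bd r] by (simp add: P_def tc_fps)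
  have MH0: "0 \<le> (\<Sum>n. norm (fps_nth (G oo W) n) * r^n)"
    by (rule suminf_nonneg[OF mc(1)]) (use r in simp)
  have "(\<Sum>n. norm (taylor_coeff f n) * r^n) = (\<Sum>n. norm (fps_nth (P * (G oo W)) n) * r^n)"
    by (simp add: tc_fps F)
  also have "\<dots> \<le> (\<Sum>n. norm (fps_nth P n) * r^n) * (\<Sum>n. norm (fps_nth (G oo W) n) * r^n)"
    by (rule maj_mult[OF cP cH' r(1)])
  also have "\<dots> \<le> 1 * (\<Sum>n. norm (fps_nth (G oo W) n) * r^n)"
    by (rule mult_right_mono[OF MP MH0])
  also have "\<dots> \<le> (\<Sum>n. norm (fps_nth G n) * r^n)" using mc(2) by simp
  finally show ?thesis by (simp add: G_def tc_fps)
qed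



lemma parseval:
  fixes h :: "complex \<Rightarrow> complex"
  assumes hol: "h holomorphic_on ball 0 1" and r: "0 < r" "r < 1"
  shows "((\<lambda>t. (norm (h (circlepath 0 r t)))^2) has_integral
            (\<Sum>n. (norm (taylor_coeff h n))^2 * r^(2*n))) {0..1}"
    and "summable (\<lambda>n. (norm (taylor_coeff h n))^2 * r^(2*n))"
proof -
  define a where "a = taylor_coeff h"
  define e where "e = (\<lambda>t::real. exp (2 * of_real pi * \<i> * of_real t))"
  define c where "c = circlepath 0 r"
  have c_eq: "c t = of_real r * e t" for t by (simp add: c_def circlepath e_def)
  have ne: "norm (e t) = 1" for t by (simp add: e_def norm_exp_eq_Re)
  have enz: "e t \<noteq> 0" for t by (simp add: e_def)
  have ecnj: "cnj (e t) = inverse (e t)" for t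
  proof -
    have "e t * cnj (e t) = 1" using complex_norm_square[of "e t"] ne[of t] by simp
    then show ?thesis using enz[of t] by (simp add: field_simps)
  qed
  have nc: "norm (c t) = r" for t using r by (simp add: c_eq norm_mult ne)
  have cball1: "c t \<in> ball 0 1" for t using nc[of t] r by simp
  have coef: "((\<lambda>t. h (c t) * cnj (e t)^n) has_integral (a n * of_real r ^ n)) {0..1}" for n
  proof -
    have hc: "((\<lambda>u. h u / (u - 0)^(Suc n)) has_contour_integral
               ((2 * pi * \<i>) / (fact n) * (deriv ^^ n) h 0)) (circlepath 0 r)"
    proof (rule Cauchy_has_contour_integral_higher_derivative_circlepath)
      show "continuous_on (cball 0 r) h"
        using holomorphic_on_imp_continuous_on[OF hol] by (rule continuous_on_subset) (use r in auto)
      show "h holomorphic_on ball 0 r" using hol by (rule holomorphic_on_subset) (use r in auto)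
      show "0 \<in> ball (0::complex) r" using r by simp
    qed
    define C where "C = (of_real r ^ n) / (2 * pi * \<i>)"
    have "((\<lambda>x. C * (h (c x) / (c x - 0)^(Suc n) * vector_derivative (circlepath 0 r) (at x within {0..1})))
            has_integral C * ((2 * pi * \<i>) / (fact n) * (deriv ^^ n) h 0)) {0..1}"
      by (rule has_integral_mult_right) (use hc in \<open>simp add: has_contour_integral_def c_def\<close>)
    then have "((\<lambda>t. h (c t) * cnj (e t)^n) has_integral C * ((2 * pi * \<i>) / (fact n) * (deriv ^^ n) h 0)) {0..1}"
    proof (rule has_integral_eq[rotated])
      fix x :: real assume x: "x \<in> {0..1}"
      have vd: "vector_derivative (circlepath 0 r) (at x within {0..1}) = 2 * pi * \<i> * of_real r * e x"
        using x by (simp add: vector_derivative_circlepath01 e_def)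
      have rnz: "complex_of_real r \<noteq> 0" using r by simp
      show "C * (h (c x) / (c x - 0)^(Suc n) * vector_derivative (circlepath 0 r) (at x within {0..1}))
            = h (c x) * cnj (e x)^n"
        unfolding vd c_eq ecnj C_def using rnz enz[of x]
        by (simp add: field_simps power_inverse power_mult_distrib)
    qed
    moreover have "C * ((2 * pi * \<i>) / (fact n) * (deriv ^^ n) h 0) = a n * of_real r ^ n"
      by (simp add: C_def a_def taylor_coeff_def field_simps)
    ultimately show ?thesis by simp
  qed
  have sM: "summable (\<lambda>n. norm (a n) * r^n)"
    unfolding a_def by (rule maj_summable[OF hol]) (use r in auto)
  define Mh where "Mh = (\<Sum>n. norm (a n) * r^n)"
  have hsum: "(\<lambda>n. a n * (c t)^n) sums h (c t)" for t
  proof -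
    have "ereal (norm (c t)) < fps_conv_radius (fps_expansion h 0)"
      by (rule conv_lt[OF hol_conv[OF hol]]) (use nc r in simp)
    from sums_eval_fps[OF this] show ?thesis
      using hol_eval[OF hol, of "c t"] nc[of t] r by (simp add: a_def tc_fps)
  qed
  have hbd: "norm (h (c t)) \<le> Mh" for t
  proof -
    have eqn: "(\<lambda>n. norm (a n * (c t)^n)) = (\<lambda>n. norm (a n) * r^n)"
      by (simp add: norm_mult norm_power nc)
    have "h (c t) = (\<Sum>n. a n * (c t)^n)" using hsum[of t] by (simp add: sums_iff)
    also have "norm \<dots> \<le> (\<Sum>n. norm (a n * (c t)^n))" by (rule summable_norm) (simp add: eqn sM)
    finally show ?thesis by (simp add: eqn Mh_def)
  qed
  define F where "F = (\<lambda>n t. (a n * of_real r ^ n) * (e t ^ n * cnj (h (c t))))"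
  have Fsum: "(\<lambda>n. F n t) sums of_real ((norm (h (c t)))^2)" for t
  proof -
    have "(\<lambda>n. a n * (c t)^n * cnj (h (c t))) sums (h (c t) * cnj (h (c t)))"
      by (rule sums_mult2[OF hsum])
    moreover have "h (c t) * cnj (h (c t)) = of_real ((norm (h (c t)))^2)"
      by (simp add: complex_norm_square[symmetric])
    moreover have "a n * (c t)^n * cnj (h (c t)) = F n t" for n
      by (simp add: F_def c_eq power_mult_distrib mult_ac)
    ultimately show ?thesis by simp
  qed
  have Fbd: "norm (F n t) \<le> norm (a n) * r^n * Mh" for n t
  proof -
    have "norm (F n t) = norm (a n) * r^n * norm (h (c t))"
      using r by (simp add: F_def norm_mult norm_power ne)
    also have "\<dots> \<le> norm (a n) * r^n * Mh" using r hbd[of t] by (intro mult_left_mono) auto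
    finally show ?thesis .
  qed
  have unif: "uniform_limit {0..1} (\<lambda>N t. \<Sum>n<N. F n t) (\<lambda>t. \<Sum>n. F n t) sequentially"
    by (rule Weierstrass_m_test[OF Fbd]) (intro summable_mult2 sM)
  have hc_cont: "continuous_on {0..1} (\<lambda>t. h (c t))"
  proof (rule continuous_on_compose2[OF holomorphic_on_imp_continuous_on[OF hol]])
    show "continuous_on {0..1} c" using path_circlepath[of 0 r] by (simp add: path_def c_def)
    show "c ` {0..1} \<subseteq> ball 0 1" using cball1 by auto
  qed
  have cont: "continuous_on {0..1} (\<lambda>t. \<Sum>n<N. F n t)" for N
    unfolding F_def e_def by (intro continuous_intros hc_cont)
  obtain I J where I: "\<And>N. ((\<lambda>t. \<Sum>n<N. F n t) has_integral I N) {0..1}"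
    and J: "((\<lambda>t. \<Sum>n. F n t) has_integral J) {0..1}" and IJ: "(I \<longlonglongrightarrow> J)"
    using uniform_limit_integral[OF unif cont] by auto
  define q where "q = (\<lambda>n. (norm (a n))^2 * r^(2*n))"
  have Fint: "(F n has_integral of_real (q n)) {0..1}" for n
  proof -
    have "((cnj \<circ> (\<lambda>t. h (c t) * cnj (e t)^n)) has_integral cnj (a n * of_real r ^ n)) {0..1}"
      using coef[of n] by (simp only: has_integral_cnj)
    then have "((\<lambda>t. (a n * of_real r ^ n) * (cnj \<circ> (\<lambda>t. h (c t) * cnj (e t)^n)) t) has_integral
                 (a n * of_real r ^ n) * cnj (a n * of_real r ^ n)) {0..1}"
      by (rule has_integral_mult_right)
    moreover have "(\<lambda>t. (a n * of_real r ^ n) * (cnj \<circ> (\<lambda>t. h (c t) * cnj (e t)^n)) t) = F n"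
      by (auto simp: F_def o_def mult_ac)
    moreover have "(a n * of_real r ^ n) * cnj (a n * of_real r ^ n) = of_real (q n)"
    proof -
      have "(a n * of_real r ^ n) * cnj (a n * of_real r ^ n) = of_real ((norm (a n * of_real r ^ n))^2)"
        by (rule complex_norm_square[symmetric])
      also have "norm (a n * of_real r ^ n) = norm (a n) * r^n" using r by (simp add: norm_mult norm_power)
      also have "(norm (a n) * r^n)^2 = q n" unfolding q_def
        by (simp add: power_mult_distrib) (metis power_mult mult.commute)
      finally show ?thesis by simp
    qed
    ultimately show ?thesis by simp
  qed
  have IN: "I N = (\<Sum>n<N. complex_of_real (q n))" for N
  proof -
    have "((\<lambda>t. \<Sum>n<N. F n t) has_integral (\<Sum>n<N. complex_of_real (q n))) {0..1}"
      by (rule has_integral_sum) (auto intro: Fint)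
    with I[of N] show ?thesis by (rule has_integral_unique)
  qed
  have "I = (\<lambda>N. \<Sum>n<N. complex_of_real (q n))" using IN by (rule ext)
  then have lim: "(\<lambda>N. \<Sum>n<N. complex_of_real (q n)) \<longlonglongrightarrow> J" using IJ by simp
  have limRe: "(\<lambda>N. \<Sum>n<N. q n) \<longlonglongrightarrow> Re J" using tendsto_Re[OF lim] by simp
  have limIm: "(\<lambda>N. 0) \<longlonglongrightarrow> Im J" using tendsto_Im[OF lim] by simp
  have ImJ: "Im J = 0" using LIMSEQ_unique[OF limIm tendsto_const] by simp
  have qs: "q sums Re J" using limRe by (simp add: sums_def)
  then show "summable (\<lambda>n. (norm (taylor_coeff h n))^2 * r^(2*n))" by (auto simp: q_def a_def sums_iff)
  have JJ: "J = of_real (suminf q)" using qs ImJ by (simp add: sums_iff complex_eq_iff)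
  have "((Re \<circ> (\<lambda>t. \<Sum>n. F n t)) has_integral Re J) {0..1}"
    by (rule has_integral_linear[OF J bounded_linear_Re])
  moreover have "(Re \<circ> (\<lambda>t. \<Sum>n. F n t)) = (\<lambda>t. (norm (h (circlepath 0 r t)))^2)"
    using Fsum by (auto simp: o_def sums_iff c_def)
  ultimately show "((\<lambda>t. (norm (h (circlepath 0 r t)))^2) has_integral
            (\<Sum>n. (norm (taylor_coeff h n))^2 * r^(2*n))) {0..1}"
    using JJ by (simp add: q_def a_def)
qed



definition Qn :: "real \<Rightarrow> (complex \<Rightarrow> complex) \<Rightarrow> real" where
  "Qn r h = (\<Sum>n. (norm (taylor_coeff h n))^2 * r^(2*n))"

lemma Q_zero: "Qn 0 h = (norm (h 0))^2"
proof -
  have "(\<lambda>n. (norm (taylor_coeff h n))^2 * (0::real)^(2*n)) = (\<lambda>n. if n = 0 then (norm (taylor_coeff h n))^2 else 0)"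
    by auto
  then have "Qn 0 h = (norm (taylor_coeff h 0))^2"
    unfolding Qn_def using sums_single[of 0 "\<lambda>n. (norm (taylor_coeff h n))^2"] by (simp add: sums_iff)
  then show ?thesis by (simp add: taylor_coeff_def)
qed

lemma Q_summable:
  assumes hol: "h holomorphic_on ball 0 1" and r: "0 \<le> r" "r < 1"
  shows "summable (\<lambda>n. (norm (taylor_coeff h n))^2 * r^(2*n))"
proof (cases "r = 0")
  case True
  have "(\<lambda>n. (norm (taylor_coeff h n))^2 * r^(2*n)) = (\<lambda>n. if n = 0 then (norm (taylor_coeff h n))^2 else 0)"
    using True by auto
  then show ?thesis using sums_single[of 0 "\<lambda>n. (norm (taylor_coeff h n))^2"] by (simp add: sums_iff)
next
  case False
  then show ?thesis using parseval(2)[OF hol] r by simp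
qed

lemma Qmono:
  assumes A: "A holomorphic_on ball 0 1" and B: "B holomorphic_on ball 0 1" and r: "0 \<le> r" "r < 1"
    and le: "\<And>z. norm z = r \<Longrightarrow> norm (A z) \<le> norm (B z)"
  shows "Qn r A \<le> Qn r B"
proof (cases "r = 0")
  case True
  have "norm (A 0) \<le> norm (B 0)" using le[of 0] True by simp
  then show ?thesis using True by (simp add: Q_zero power_mono)
next
  case False
  then have r0: "0 < r" using r by simp
  have ncp: "norm (circlepath 0 r t) = r" for t using r0 by (simp add: circlepath norm_mult norm_exp_eq_Re)
  show ?thesis unfolding Qn_def
  proof (rule has_integral_le[OF parseval(1)[OF A r0 r(2)] parseval(1)[OF B r0 r(2)]])
    fix t :: real
    show "(norm (A (circlepath 0 r t)))^2 \<le> (norm (B (circlepath 0 r t)))^2"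
      by (rule power_mono[OF le[OF ncp]]) simp
  qed
qed

lemma tc_cong:
  assumes "\<And>z. z \<in> ball 0 1 \<Longrightarrow> A z = B z"
  shows "taylor_coeff A n = taylor_coeff B n"
proof -
  have "eventually (\<lambda>z. z \<in> ball 0 1) (nhds (0::complex))"
    by (intro eventually_nhds_in_open) auto
  then have "eventually (\<lambda>z. A z = B z) (nhds 0)" by eventually_elim (use assms in auto)
  then have "fps_expansion A 0 = fps_expansion B 0" by (rule fps_expansion_cong)
  then show ?thesis by (simp add: tc_fps)
qed

lemma Q_cong:
  assumes "\<And>z. z \<in> ball 0 1 \<Longrightarrow> A z = B z"
  shows "Qn r A = Qn r B"
  unfolding Qn_def using tc_cong[OF assms] by simp

lemma Q_const: assumes "0 \<le> r" shows "Qn r (\<lambda>_. c) = (norm c)^2"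
proof -
  have "fps_expansion (\<lambda>_. c) 0 = fps_const c" by (rule fps_expansion_eqI) simp
  then have tc: "taylor_coeff (\<lambda>_. c) n = (if n = 0 then c else 0)" for n by (simp add: tc_fps)
  have "(\<lambda>n. (norm (taylor_coeff (\<lambda>_. c) n))^2 * r^(2*n)) = (\<lambda>n. if n = 0 then (norm c)^2 else 0)"
    by (auto simp: tc)
  then show ?thesis unfolding Qn_def using sums_single[of 0 "\<lambda>n. (norm c)^2"] by (simp add: sums_iff)
qed

lemma Q_const_add:
  assumes hol: "u holomorphic_on ball 0 1" and u0: "u 0 = 0" and r: "0 \<le> r" "r < 1"
  shows "Qn r (\<lambda>z. c + u z) = (norm c)^2 + Qn r u"
proof -
  have "(\<lambda>z. c + u z) has_fps_expansion fps_const c + fps_expansion u 0"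
    by (intro fps_expansion_intros hol_fps hol)
  then have "fps_expansion (\<lambda>z. c + u z) 0 = fps_const c + fps_expansion u 0" by (rule fps_expansion_eqI)
  then have tc: "taylor_coeff (\<lambda>z. c + u z) n = (if n = 0 then c else 0) + taylor_coeff u n" for n
    by (simp add: tc_fps)
  have tu0: "taylor_coeff u 0 = 0" by (simp add: taylor_coeff_def u0)
  define f where "f = (\<lambda>n. (norm (taylor_coeff (\<lambda>z. c + u z) n))^2 * r^(2*n))"
  define g where "g = (\<lambda>n. (norm (taylor_coeff u n))^2 * r^(2*n))"
  have sg: "summable g" unfolding g_def by (rule Q_summable[OF hol r])
  have fS: "f (Suc n) = g (Suc n)" for n by (simp add: f_def g_def tc)
  have "summable (\<lambda>n. g (Suc n))" using sg by (simp only: summable_Suc_iff)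
  then have "summable (\<lambda>n. f (Suc n))" by (simp only: fS)
  then have sf: "summable f" by (simp only: summable_Suc_iff)
  have "suminf f = f 0 + (\<Sum>n. f (Suc n))" using suminf_split_head[OF sf] by simp
  also have "f 0 = (norm c)^2" by (simp add: f_def tc tu0)
  also have "(\<Sum>n. f (Suc n)) = (\<Sum>n. g (Suc n))" by (simp add: fS)
  also have "\<dots> = suminf g" using suminf_split_head[OF sg] by (simp add: g_def tu0)
  finally show ?thesis by (simp add: Qn_def f_def g_def)
qed

lemma Q_X_mult:
  assumes hol: "v holomorphic_on ball 0 1" and r: "0 \<le> r" "r < 1"
  shows "Qn r (\<lambda>z. z * v z) = r^2 * Qn r v"
proof -
  have "(\<lambda>z. z * v z) has_fps_expansion fps_X * fps_expansion v 0"
    by (intro fps_expansion_intros hol_fps hol)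
  then have "fps_expansion (\<lambda>z. z * v z) 0 = fps_X * fps_expansion v 0" by (rule fps_expansion_eqI)
  then have tc: "taylor_coeff (\<lambda>z. z * v z) n = (if n = 0 then 0 else taylor_coeff v (n - 1))" for n
    by (simp add: tc_fps)
  define f where "f = (\<lambda>n. (norm (taylor_coeff (\<lambda>z. z * v z) n))^2 * r^(2*n))"
  define g where "g = (\<lambda>n. (norm (taylor_coeff v n))^2 * r^(2*n))"
  have sg: "summable g" unfolding g_def by (rule Q_summable[OF hol r])
  have fS: "f (Suc n) = r^2 * g n" for n by (simp add: f_def g_def tc power_add mult_ac power2_eq_square)
  have "(\<lambda>n. f (Suc n)) sums (r^2 * suminf g)" unfolding fS by (intro sums_mult summable_sums sg)
  then have "f sums (r^2 * suminf g + f 0)" by (simp add: sums_Suc_iff)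
  moreover have "f 0 = 0" by (simp add: f_def tc)
  ultimately show ?thesis by (simp add: Qn_def f_def g_def sums_iff)
qed



lemma littlewood:
  fixes g \<omega> :: "complex \<Rightarrow> complex"
  assumes g_hol: "g holomorphic_on ball 0 1"
    and \<omega>_hol: "\<omega> holomorphic_on ball 0 1"
    and \<omega>0: "\<omega> 0 = 0"
    and \<omega>_bd: "\<And>z. z \<in> ball 0 1 \<Longrightarrow> norm (\<omega> z) \<le> 1"
    and r: "0 \<le> r" "r < 1"
  shows "Qn r (g \<circ> \<omega>) \<le> Qn r g"
proof -
  define G where "G = fps_expansion g 0"
  have cG: "1 \<le> fps_conv_radius G" unfolding G_def by (rule hol_conv[OF g_hol])
  define gN where "gN = (\<lambda>N. eval_fps (fps_shift N G))"
  have sub: "ball 0 1 \<subseteq> eball (0::complex) (fps_conv_radius (fps_shift N G))" for N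
  proof (rule subsetI)
    fix x :: complex assume "x \<in> ball 0 1"
    then have "norm x < 1" by simp
    from conv_lt[OF cG this] show "x \<in> eball 0 (fps_conv_radius (fps_shift N G))" by (simp add: dist_norm)
  qed
  have gN_hol: "gN N holomorphic_on ball 0 1" for N
    unfolding gN_def using sub by (rule holomorphic_on_eval_fps)
  have \<omega>le: "norm (\<omega> z) \<le> norm z" if "norm z < 1" for z
    by (rule schwarz_le[OF \<omega>_hol \<omega>0 \<omega>_bd that])
  have wball: "\<omega> z \<in> ball 0 1" if "z \<in> ball 0 1" for z
    using \<omega>le[of z] that by simp
  define v where "v = (\<lambda>N z. gN N (\<omega> z))"
  have v_hol: "v N holomorphic_on ball 0 1" for N
  proof -
    have "(gN N \<circ> \<omega>) holomorphic_on ball 0 1"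
      by (rule holomorphic_on_compose_gen[OF \<omega>_hol gN_hol]) (use wball in blast)
    then show ?thesis by (simp add: v_def o_def)
  qed
  have rec: "gN N w = fps_nth G N + w * gN (Suc N) w" if w: "norm w < 1" for N w
  proof -
    have cw: "ereal (norm w) < fps_conv_radius (fps_shift M G)" for M
      using conv_lt[OF cG w] by simp
    have s1: "(\<lambda>k. fps_nth G (k + N) * w^k) sums gN N w"
      using sums_eval_fps[OF cw[of N]] by (simp add: gN_def)
    have s2: "(\<lambda>k. fps_nth G (k + Suc N) * w^k) sums gN (Suc N) w"
      using sums_eval_fps[OF cw[of "Suc N"]] by (simp add: gN_def)
    have "(\<lambda>k. w * (fps_nth G (k + Suc N) * w^k)) sums (w * gN (Suc N) w)"
      by (rule sums_mult[OF s2])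
    then have "(\<lambda>k. fps_nth G (Suc k + N) * w^Suc k) sums (w * gN (Suc N) w)"
      by (simp add: mult_ac)
    then have "(\<lambda>k. fps_nth G (k + N) * w^k) sums (w * gN (Suc N) w + fps_nth G (0 + N) * w^0)"
      by (subst (asm) sums_Suc_iff)
    then have "(\<lambda>k. fps_nth G (k + N) * w^k) sums (fps_nth G N + w * gN (Suc N) w)"
      by (simp add: add.commute)
    with s1 show ?thesis by (rule sums_unique2)
  qed
  have step: "Qn r (v N) \<le> (norm (fps_nth G N))^2 + r^2 * Qn r (v (Suc N))" for N
  proof -
    have "Qn r (v N) = Qn r (\<lambda>z. fps_nth G N + (\<omega> z * v (Suc N) z))"
    proof (rule Q_cong)
      fix z :: complex assume "z \<in> ball 0 1"
      then show "v N z = fps_nth G N + \<omega> z * v (Suc N) z"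
        using rec[of "\<omega> z" N] wball by (simp add: v_def)
    qed
    also have "\<dots> = (norm (fps_nth G N))^2 + Qn r (\<lambda>z. \<omega> z * v (Suc N) z)"
      by (rule Q_const_add[OF _ _ r]) (auto intro!: holomorphic_intros \<omega>_hol v_hol simp: \<omega>0)
    also have "Qn r (\<lambda>z. \<omega> z * v (Suc N) z) \<le> Qn r (\<lambda>z. z * v (Suc N) z)"
    proof (rule Qmono[OF _ _ r])
      show "(\<lambda>z. \<omega> z * v (Suc N) z) holomorphic_on ball 0 1" by (intro holomorphic_intros \<omega>_hol v_hol)
      show "(\<lambda>z. z * v (Suc N) z) holomorphic_on ball 0 1" by (intro holomorphic_intros v_hol)
      fix z :: complex assume "norm z = r"
      then have "norm (\<omega> z) \<le> norm z" using r by (intro \<omega>le) simp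
      then show "norm (\<omega> z * v (Suc N) z) \<le> norm (z * v (Suc N) z)"
        by (simp add: norm_mult mult_right_mono)
    qed
    also have "\<dots> = r^2 * Qn r (v (Suc N))" by (rule Q_X_mult[OF v_hol r])
    finally show ?thesis by simp
  qed
  have e2: "r^(2 * Suc N) = r^(2*N) * r^2" for N by (simp add: power2_eq_square)
  have iter: "Qn r (v 0) \<le> (\<Sum>k<N. (norm (fps_nth G k))^2 * r^(2*k)) + r^(2*N) * Qn r (v N)" for N
  proof (induction N)
    case 0 show ?case by simp
  next
    case (Suc N)
    have "r^(2*N) * Qn r (v N) \<le> r^(2*N) * ((norm (fps_nth G N))^2 + r^2 * Qn r (v (Suc N)))"
      by (rule mult_left_mono[OF step]) (use r in simp)
    also have "\<dots> = (norm (fps_nth G N))^2 * r^(2*N) + r^(2*Suc N) * Qn r (v (Suc N))"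
      by (simp add: e2 algebra_simps power2_eq_square)
    finally show ?case using Suc.IH by simp
  qed
  define m where "m = (\<lambda>k. norm (fps_nth G k) * r^k)"
  have sm: "summable m" unfolding m_def G_def using maj_summable[OF g_hol r] by (simp add: tc_fps)
  define T where "T = (\<lambda>N. \<Sum>k. norm (fps_nth G (k + N)) * r^k)"
  have sT: "summable (\<lambda>k. norm (fps_nth G (k + N)) * r^k)" for N
  proof -
    have "ereal (norm (complex_of_real r)) < fps_conv_radius (fps_shift N G)"
      using conv_lt[OF cG, of "complex_of_real r"] r by simp
    from norm_summable_fps[OF this] show ?thesis using r by (simp add: norm_mult norm_power)
  qed
  have T0: "0 \<le> T N" for N unfolding T_def by (rule suminf_nonneg[OF sT]) (use r in simp)
  have vbd: "norm (v N z) \<le> T N" if z: "norm z = r" for N z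
  proof -
    have wz: "norm (\<omega> z) \<le> r" using \<omega>le[of z] z r by simp
    have wz1: "norm (\<omega> z) < 1" using wz r by simp
    have cw: "ereal (norm (\<omega> z)) < fps_conv_radius (fps_shift N G)"
      using conv_lt[OF cG wz1] by simp
    have "v N z = (\<Sum>k. fps_nth G (k + N) * (\<omega> z)^k)"
      using sums_eval_fps[OF cw] by (simp add: v_def gN_def sums_iff)
    also have "norm \<dots> \<le> (\<Sum>k. norm (fps_nth G (k + N) * (\<omega> z)^k))"
      by (rule summable_norm) (use norm_summable_fps[OF cw] in simp)
    also have "\<dots> \<le> T N" unfolding T_def
    proof (rule suminf_le)
      fix k show "norm (fps_nth G (k + N) * (\<omega> z)^k) \<le> norm (fps_nth G (k + N)) * r^k"
        by (simp add: norm_mult norm_power mult_left_mono power_mono wz)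
    qed (use norm_summable_fps[OF cw] sT in simp_all)
    finally show ?thesis .
  qed
  have QvN: "Qn r (v N) \<le> (T N)^2" for N
  proof -
    have "Qn r (v N) \<le> Qn r (\<lambda>_. complex_of_real (T N))"
    proof (rule Qmono[OF v_hol _ r])
      show "(\<lambda>_. complex_of_real (T N)) holomorphic_on ball 0 1" by simp
      fix z :: complex assume "norm z = r"
      then show "norm (v N z) \<le> norm (complex_of_real (T N))" using vbd T0 by simp
    qed
    also have "\<dots> = (T N)^2" using Q_const[OF r(1)] T0 by simp
    finally show ?thesis .
  qed
  have tailT: "r^N * T N = (\<Sum>k. m (k + N))" for N
  proof -
    have "r^N * T N = (\<Sum>k. r^N * (norm (fps_nth G (k + N)) * r^k))"
      unfolding T_def by (rule suminf_mult[OF sT, symmetric])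
    also have "\<dots> = (\<Sum>k. m (k + N))" by (simp add: m_def power_add mult_ac)
    finally show ?thesis .
  qed
  have tail0: "(\<lambda>N. \<Sum>k. m (k + N)) \<longlonglongrightarrow> 0"
  proof -
    have "(\<lambda>N. suminf m - (\<Sum>i<N. m i)) \<longlonglongrightarrow> suminf m - suminf m"
      by (intro tendsto_intros summable_LIMSEQ sm)
    then show ?thesis using suminf_minus_initial_segment[OF sm] by simp
  qed
  have QgN: "(\<Sum>k<N. (norm (fps_nth G k))^2 * r^(2*k)) \<le> Qn r g" for N
  proof -
    have "(\<Sum>k<N. (norm (fps_nth G k))^2 * r^(2*k)) = (\<Sum>k<N. (norm (taylor_coeff g k))^2 * r^(2*k))"
      by (simp add: G_def tc_fps)
    also have "\<dots> \<le> Qn r g"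
      unfolding Qn_def by (rule sum_le_suminf[OF Q_summable[OF g_hol r]]) (use r in auto)
    finally show ?thesis .
  qed
  have v0: "Qn r (g \<circ> \<omega>) = Qn r (v 0)"
  proof (rule Q_cong)
    fix z :: complex assume "z \<in> ball 0 1"
    then show "(g \<circ> \<omega>) z = v 0 z"
      using hol_eval[OF g_hol, of "\<omega> z"] wball[of z] by (simp add: v_def gN_def G_def)
  qed
  have bnd: "Qn r (g \<circ> \<omega>) \<le> Qn r g + (\<Sum>k. m (k + N))^2" for N
  proof -
    have "Qn r (g \<circ> \<omega>) \<le> (\<Sum>k<N. (norm (fps_nth G k))^2 * r^(2*k)) + r^(2*N) * Qn r (v N)"
      using v0 iter[of N] by simp
    also have "r^(2*N) * Qn r (v N) \<le> r^(2*N) * (T N)^2"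
      by (rule mult_left_mono[OF QvN]) (use r in simp)
    also have "r^(2*N) * (T N)^2 = (\<Sum>k. m (k + N))^2"
      by (simp add: tailT[symmetric] power_mult_distrib power_mult[symmetric] mult.commute)
    finally show ?thesis using QgN[of N] by (simp add: o_def)
  qed
  have "(\<lambda>N. Qn r g + (\<Sum>k. m (k + N))^2) \<longlonglongrightarrow> Qn r g + 0^2"
    by (intro tendsto_intros tail0)
  then have lim: "(\<lambda>N. Qn r g + (\<Sum>k. m (k + N))^2) \<longlonglongrightarrow> Qn r g" by simp
  show ?thesis
    by (rule tendsto_le[OF trivial_limit_sequentially lim tendsto_const]) (use bnd in simp)
qed



theorem lemma1:
  fixes f g \<Phi> \<omega> :: "complex \<Rightarrow> complex" and r :: real
  assumes f_hol: "f holomorphic_on ball 0 1"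
    and g_hol: "g holomorphic_on ball 0 1"
    and \<Phi>_hol: "\<Phi> holomorphic_on ball 0 1"
    and \<omega>_hol: "\<omega> holomorphic_on ball 0 1"
    and \<omega>0: "\<omega> 0 = 0"
    and \<omega>_bd: "\<And>z. z \<in> ball 0 1 \<Longrightarrow> norm (\<omega> z) \<le> 1"
    and \<Phi>_bd: "\<And>z. z \<in> ball 0 1 \<Longrightarrow> norm (\<Phi> z) \<le> 1"
    and quasi: "\<And>z. z \<in> ball 0 1 \<Longrightarrow> f z = \<Phi> z * g (\<omega> z)"
    and r: "0 \<le> r" "r \<le> 1/3"
  shows "(\<Sum>n. norm (taylor_coeff f n) * r ^ n)
           + (1 / (1 + norm (taylor_coeff f 0)) + r / (1 - r))
             * (\<Sum>n. (norm (taylor_coeff f (Suc n)))\<^sup>2 * r ^ (2 * Suc n))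
         \<le> (\<Sum>n. norm (taylor_coeff g n) * r ^ n)
           + (1 / (1 + norm (taylor_coeff g 0 * \<Phi> 0)) + r / (1 - r))
             * ((norm (taylor_coeff g 0))\<^sup>2 * (1 - (norm (\<Phi> 0))\<^sup>2)
                + (\<Sum>n. (norm (taylor_coeff g (Suc n)))\<^sup>2 * r ^ (2 * Suc n)))"
proof -
  have r1: "r < 1" using r by simp
  have a0: "taylor_coeff f 0 = \<Phi> 0 * taylor_coeff g 0"
    using quasi[of 0] \<omega>0 by (simp add: taylor_coeff_def)
  have M: "(\<Sum>n. norm (taylor_coeff f n) * r ^ n) \<le> (\<Sum>n. norm (taylor_coeff g n) * r ^ n)"
    by (rule maj_main[OF f_hol g_hol \<Phi>_hol \<omega>_hol \<omega>0 \<omega>_bd \<Phi>_bd quasi r])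
  have wball: "\<omega> z \<in> ball 0 1" if "z \<in> ball 0 1" for z
    using schwarz_le[OF \<omega>_hol \<omega>0 \<omega>_bd, of z] that by simp
  have gw_hol: "(g \<circ> \<omega>) holomorphic_on ball 0 1"
    by (rule holomorphic_on_compose_gen[OF \<omega>_hol g_hol]) (use wball in blast)
  have "Qn r f \<le> Qn r (g \<circ> \<omega>)"
  proof (rule Qmono[OF f_hol gw_hol r(1) r1])
    fix z :: complex assume "norm z = r"
    then have z: "z \<in> ball 0 1" using r1 by simp
    have "norm (f z) = norm (\<Phi> z) * norm (g (\<omega> z))" using quasi[OF z] by (simp add: norm_mult)
    also have "\<dots> \<le> 1 * norm (g (\<omega> z))" by (rule mult_right_mono[OF \<Phi>_bd[OF z]]) simp
    finally show "norm (f z) \<le> norm ((g \<circ> \<omega>) z)" by simp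
  qed
  also have "\<dots> \<le> Qn r g" by (rule littlewood[OF g_hol \<omega>_hol \<omega>0 \<omega>_bd r(1) r1])
  finally have Q: "Qn r f \<le> Qn r g" .
  define Sf where "Sf = (\<Sum>n. (norm (taylor_coeff f (Suc n)))\<^sup>2 * r ^ (2 * Suc n))"
  define Sg where "Sg = (\<Sum>n. (norm (taylor_coeff g (Suc n)))\<^sup>2 * r ^ (2 * Suc n))"
  have Sf: "Sf = Qn r f - (norm (taylor_coeff f 0))^2"
    unfolding Sf_def Qn_def using suminf_split_head[OF Q_summable[OF f_hol r(1) r1]] by simp
  have Sg: "Sg = Qn r g - (norm (taylor_coeff g 0))^2"
    unfolding Sg_def Qn_def using suminf_split_head[OF Q_summable[OF g_hol r(1) r1]] by simp
  have na0: "(norm (taylor_coeff f 0))^2 = (norm (\<Phi> 0))^2 * (norm (taylor_coeff g 0))^2"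
    by (simp add: a0 norm_mult power_mult_distrib)
  have S: "Sf \<le> (norm (taylor_coeff g 0))\<^sup>2 * (1 - (norm (\<Phi> 0))\<^sup>2) + Sg"
    using Q unfolding Sf Sg na0 by (simp add: algebra_simps)
  define C where "C = 1 / (1 + norm (taylor_coeff f 0)) + r / (1 - r)"
  have C0: "0 \<le> C" unfolding C_def using r1 r by (intro add_nonneg_nonneg) auto
  have Ceq: "1 / (1 + norm (taylor_coeff g 0 * \<Phi> 0)) + r / (1 - r) = C"
    by (simp add: C_def a0 mult.commute)
  have "C * Sf \<le> C * ((norm (taylor_coeff g 0))\<^sup>2 * (1 - (norm (\<Phi> 0))\<^sup>2) + Sg)"
    by (rule mult_left_mono[OF S C0])
  with M show ?thesis unfolding Ceq by (simp add: C_def Sf_def Sg_def)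
qed

end
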